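(* Consider the linear regression $X_{n+1}=\theta\phi_n+\varepsilon_{n+1}$, $n\ge0$, with $\theta\in\mathbb{R}$, where $(\phi_n)_{n\ge0}$ is an i.i.d. sequence of real random variables, $(\varepsilon_n)_{n\ge1}$ is an identically distributed sequence with mean $0$ and variance $\sigma^2>0$, and for each $n\ge0$, $\varepsilon_{n+1}$ is independent of $\sigma(\phi_0,\dots,\phi_n,\varepsilon_1,\dots,\varepsilon_n)$. Let $\hat\theta_n=\frac{\sum_{k=1}^n\phi_{k-1}X_k}{\sum_{k=1}^n\phi_{k-1}^2}$ be the least-squares estimator. Let $H(t)=\log\mathbb{E}[\exp(t\phi_n^2)]$ and $L(t)=\log\mathbb{E}[\exp(t\varepsilon_n^2)]$. Assume $L$ is finite on $[0,c]$ for some $c>0$ and let $I(x)=\sup_{0\le t\le c}\{xt-L(t)\}$. Then for all $n\ge1$, $x>0$, $y>0$, $$\mathbb{P}(|\hat\theta_n-\theta|\ge x)\le 2\inf_{p>1}\exp\left(\frac{n}{p}H\left(-\frac{(p-1)x^2}{2\sigma^2(1+y)}\right)\right)+\exp\left(-nI\left(\frac{\sigma^2y}{n}\right)\right).$$ *)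

theory Defs
  imports "HOL-Probability.Probability"
begin

definition regX :: "real \<Rightarrow> (nat \<Rightarrow> 'a \<Rightarrow> real) \<Rightarrow> (nat \<Rightarrow> 'a \<Rightarrow> real) \<Rightarrow> nat \<Rightarrow> 'a \<Rightarrow> real" where
  "regX \<theta> \<phi> \<epsilon> k \<omega> = \<theta> * \<phi> (k - 1) \<omega> + \<epsilon> k \<omega>"

text \<open>Least-squares estimator (Isabelle convention: division by 0 gives 0).\<close>
definition lse :: "real \<Rightarrow> (nat \<Rightarrow> 'a \<Rightarrow> real) \<Rightarrow> (nat \<Rightarrow> 'a \<Rightarrow> real) \<Rightarrow> nat \<Rightarrow> 'a \<Rightarrow> real" where
  "lse \<theta> \<phi> \<epsilon> n \<omega> =
     (\<Sum>k=1..n. \<phi> (k - 1) \<omega> * regX \<theta> \<phi> \<epsilon> k \<omega>) / (\<Sum>k=1..n. (\<phi> (k - 1) \<omega>)\<^sup>2)"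

definition rv_events :: "'a measure \<Rightarrow> ('a \<Rightarrow> real) \<Rightarrow> 'a set set" where
  "rv_events M f = {f -` A \<inter> space M | A. A \<in> sets borel}"

definition logmgf_sq :: "'a measure \<Rightarrow> ('a \<Rightarrow> real) \<Rightarrow> real \<Rightarrow> real" where
  "logmgf_sq M f t = ln (integral\<^sup>L M (\<lambda>\<omega>. exp (t * (f \<omega>)\<^sup>2)))"

end

theory Submission imports Defs begin

lemma k_ge1: fixes x::real shows "1 \<le> (1 + x + x^2/2) * exp (x^2/2 - x)"
proof -
  define k where "k x = (1 + x + x^2/2) * exp (x^2/2 - x)" for x::real
  have pos: "0 < 1 + x/2 + x^2/2" for x::real
  proof -
    have "0 \<le> (x+1/2)^2" by simp
    then show ?thesis by (simp add: power2_eq_square algebra_simps) 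
  qed
  have D: "(k has_real_derivative (exp (x^2/2 - x) * (x * (1 + x/2 + x^2/2)))) (at x)" for x
    unfolding k_def
    by (rule derivative_eq_intros refl | simp)+ (simp add: algebra_simps power2_eq_square power3_eq_cube)
  have k0: "k 0 = 1" by (simp add: k_def)
  show ?thesis
  proof (cases "x \<ge> 0")
    case True
    have "k 0 \<le> k x"
    proof (rule DERIV_nonneg_imp_nondecreasing[OF True])
      fix t::real assume "0 \<le> t" "t \<le> x"
      then show "\<exists>y. (k has_real_derivative y) (at t) \<and> 0 \<le> y"
        using D[of t] pos[of t] by (intro exI[of _ "exp (t^2/2 - t) * (t * (1 + t/2 + t^2/2))"]) auto
    qed
    then show ?thesis using k0 by (simp add: k_def)
  next
    case False
    have "k 0 \<le> k x"
      by (rule deriv_nonpos_imp_antimono[of x 0 k, OF D]) (use False pos in \<open>auto intro!: mult_nonneg_nonpos less_imp_le simp: mult_le_0_iff\<close>)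
    then show ?thesis using k0 by (simp add: k_def)
  qed
qed

lemma exp_ineq: fixes z::real shows "exp (z - z^2/2) \<le> 1 + z + z^2/2"
proof -
  have "1 \<le> (1 + z + z^2/2) * exp (z^2/2 - z)" by (rule k_ge1)
  then have "exp (z - z^2/2) * 1 \<le> exp (z - z^2/2) * ((1 + z + z^2/2) * exp (z^2/2 - z))"
    by (intro mult_left_mono) auto
  also have "\<dots> = (exp (z - z^2/2) * exp (z^2/2 - z)) * (1 + z + z^2/2)" by (simp add: algebra_simps)
  also have "exp (z - z^2/2) * exp (z^2/2 - z) = 1" by (simp add: mult_exp_exp)
  finally show ?thesis by simp
qed

locale reg = prob_space M for M :: "'a measure" +
  fixes \<phi> \<epsilon> :: "nat \<Rightarrow> 'a \<Rightarrow> real" and \<sigma>2 :: real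
  assumes phi_rv: "\<And>n. \<phi> n \<in> borel_measurable M"
    and eps_rv: "\<And>n. \<epsilon> n \<in> borel_measurable M"
    and eps_indep: "\<And>n. indep_set
          (sigma_sets (space M) (rv_events M (\<epsilon> (Suc n))))
          (sigma_sets (space M) ((\<Union>i\<in>{..n}. rv_events M (\<phi> i)) \<union> (\<Union>i\<in>{1..n}. rv_events M (\<epsilon> i))))"
begin

definition G :: "nat \<Rightarrow> 'a set set" where
  "G m = (\<Union>i\<in>{..m}. rv_events M (\<phi> i)) \<union> (\<Union>i\<in>{1..m}. rv_events M (\<epsilon> i))"

definition F :: "nat \<Rightarrow> 'a measure" where
  "F m = sigma (space M) (G m)"

lemma rv_events_sub: "rv_events M f \<subseteq> Pow (space M)"
  unfolding rv_events_def by auto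

lemma G_sub: "G m \<subseteq> Pow (space M)"
  unfolding G_def using rv_events_sub by blast

lemma space_F[simp]: "space (F m) = space M"
  unfolding F_def using G_sub by (simp add: space_measure_of)

lemma sets_F: "sets (F m) = sigma_sets (space M) (G m)"
  unfolding F_def using G_sub by (simp add: sets_measure_of)

lemma rv_meas:
  assumes "rv_events M f \<subseteq> G m"
  shows "f \<in> borel_measurable (F m)"
proof (rule measurableI)
  fix A :: "real set" assume "A \<in> sets borel"
  then have "f -` A \<inter> space M \<in> rv_events M f" unfolding rv_events_def by blast
  then show "f -` A \<inter> space (F m) \<in> sets (F m)" using assms by (auto simp: sets_F)
qed auto

lemma phi_F: "i \<le> m \<Longrightarrow> \<phi> i \<in> borel_measurable (F m)"
  by (rule rv_meas) (auto simp: G_def)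

lemma eps_F: "1 \<le> i \<Longrightarrow> i \<le> m \<Longrightarrow> \<epsilon> i \<in> borel_measurable (F m)"
  by (rule rv_meas) (auto simp: G_def)

lemma G_events: "G m \<subseteq> sets M"
proof -
  have "rv_events M f \<subseteq> sets M" if "f \<in> borel_measurable M" for f
    using that unfolding rv_events_def by (auto intro: measurable_sets)
  then show ?thesis unfolding G_def using phi_rv eps_rv by blast
qed

lemma subalg_F: "subalgebra M (F m)"
  unfolding subalgebra_def using G_events
  by (simp add: sets_F sets.sigma_sets_subset)

lemma KEY:
  assumes Y: "Y \<in> measurable (F m) N" and h: "h \<in> borel_measurable (N \<Otimes>\<^sub>M borel)"
  shows "(\<integral>\<^sup>+\<omega>. h (Y \<omega>, \<epsilon> (Suc m) \<omega>) \<partial>M)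
       = (\<integral>\<^sup>+u. \<integral>\<^sup>+e. h (u, e) \<partial>distr M borel (\<epsilon> (Suc m)) \<partial>distr M N Y)"
proof -
  let ?e = "\<epsilon> (Suc m)"
  have YM: "Y \<in> measurable M N" by (rule measurable_from_subalg[OF subalg_F Y])
  have eM: "?e \<in> borel_measurable M" by (rule eps_rv)
  have indYE: "prob ((Y -` A \<inter> space M) \<inter> (?e -` B \<inter> space M)) = prob (Y -` A \<inter> space M) * prob (?e -` B \<inter> space M)"
    if A: "A \<in> sets N" and B: "B \<in> sets (borel::real measure)" for A B
  proof -
    have a: "Y -` A \<inter> space M \<in> sigma_sets (space M) (G m)"
      using measurable_sets[OF Y A] by (simp add: sets_F)
    have b: "?e -` B \<inter> space M \<in> sigma_sets (space M) (rv_events M ?e)"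
      using B unfolding rv_events_def by blast
    from eps_indep[of m, unfolded indep_sets2_eq G_def[symmetric]] a b
    show ?thesis by (auto simp: mult.commute Int_commute)
  qed
  have XY: "(\<lambda>x. (Y x, ?e x)) \<in> measurable M (N \<Otimes>\<^sub>M borel)"
    using YM eM by (rule measurable_Pair)
  interpret P1: prob_space "distr M N Y" using YM by (rule prob_space_distr)
  interpret P2: prob_space "distr M borel ?e" using eM by (rule prob_space_distr)
  interpret PP: pair_prob_space "distr M N Y" "distr M borel ?e" by unfold_locales
  have dist: "distr M N Y \<Otimes>\<^sub>M distr M borel ?e = distr M (N \<Otimes>\<^sub>M borel) (\<lambda>x. (Y x, ?e x))"
  proof (rule pair_measure_eqI)
    show "sigma_finite_measure (distr M N Y)" ..
    show "sigma_finite_measure (distr M borel ?e)" ..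
    fix A B assume A: "A \<in> sets (distr M N Y)" and B: "B \<in> sets (distr M borel ?e)"
    have "emeasure (distr M (N \<Otimes>\<^sub>M borel) (\<lambda>x. (Y x, ?e x))) (A \<times> B)
        = emeasure M ((\<lambda>x. (Y x, ?e x)) -` (A \<times> B) \<inter> space M)"
      using A B by (intro emeasure_distr[OF XY]) auto
    also have "(\<lambda>x. (Y x, ?e x)) -` (A \<times> B) \<inter> space M = (Y -` A \<inter> space M) \<inter> (?e -` B \<inter> space M)"
      by auto
    also have "emeasure M \<dots> = emeasure M (Y -` A \<inter> space M) * emeasure M (?e -` B \<inter> space M)"
      using indYE[of A B] A B
      by (simp add: emeasure_eq_measure measure_nonneg ennreal_mult)
    also have "\<dots> = emeasure (distr M N Y) A * emeasure (distr M borel ?e) B"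
      using YM eM A B by (simp add: emeasure_distr)
    finally show "emeasure (distr M N Y) A * emeasure (distr M borel ?e) B
        = emeasure (distr M (N \<Otimes>\<^sub>M borel) (\<lambda>x. (Y x, ?e x))) (A \<times> B)" by simp
  qed simp
  have hm: "h \<in> borel_measurable (distr M N Y \<Otimes>\<^sub>M distr M borel ?e)"
    using h by (simp cong: measurable_cong_sets)
  have "(\<integral>\<^sup>+\<omega>. h (Y \<omega>, ?e \<omega>) \<partial>M) = (\<integral>\<^sup>+z. h z \<partial>distr M (N \<Otimes>\<^sub>M borel) (\<lambda>x. (Y x, ?e x)))"
    using h YM eM by (subst nn_integral_distr) auto
  also have "\<dots> = (\<integral>\<^sup>+z. h z \<partial>(distr M N Y \<Otimes>\<^sub>M distr M borel ?e))" by (simp add: dist)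
  also have "\<dots> = (\<integral>\<^sup>+u. \<integral>\<^sup>+e. h (u, e) \<partial>distr M borel ?e \<partial>distr M N Y)"
    using P2.nn_integral_fst[OF hm] by simp
  finally show ?thesis .
qed

end

locale reg2 = reg +
  assumes eps_id: "\<And>n. n \<ge> 1 \<Longrightarrow> distr M borel (\<epsilon> n) = distr M borel (\<epsilon> 1)"
    and eps_int: "\<And>n. n \<ge> 1 \<Longrightarrow> integrable M (\<epsilon> n)"
    and eps_int2: "\<And>n. n \<ge> 1 \<Longrightarrow> integrable M (\<lambda>\<omega>. (\<epsilon> n \<omega>)\<^sup>2)"
    and eps_mean: "\<And>n. n \<ge> 1 \<Longrightarrow> expectation (\<epsilon> n) = 0"
    and eps_var: "\<And>n. n \<ge> 1 \<Longrightarrow> variance (\<epsilon> n) = \<sigma>2"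
begin

definition "Sm m \<omega> = (\<Sum>k=1..m. (\<phi> (k-1) \<omega>)\<^sup>2)"
definition "Mm m \<omega> = (\<Sum>k=1..m. \<phi> (k-1) \<omega> * \<epsilon> k \<omega>)"
definition "Qm m \<omega> = (\<Sum>k=1..m. (\<phi> (k-1) \<omega>)\<^sup>2 * (\<epsilon> k \<omega>)\<^sup>2)"
definition "Em m \<omega> = (\<Sum>k=1..m. (\<epsilon> k \<omega>)\<^sup>2)"
definition "W l m \<omega> = exp (l * Mm m \<omega> - l\<^sup>2/2 * (Qm m \<omega> + \<sigma>2 * Sm m \<omega>))"
definition "g l u e = exp (l * u * e - l\<^sup>2/2 * (u\<^sup>2 * e\<^sup>2 + \<sigma>2 * u\<^sup>2))"

lemma meas_F:
  "Sm m \<in> borel_measurable (F m)" "Mm m \<in> borel_measurable (F m)"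
  "Qm m \<in> borel_measurable (F m)" "Em m \<in> borel_measurable (F m)"
  unfolding Sm_def Mm_def Qm_def Em_def
  using phi_F eps_F
  by (auto intro!: borel_measurable_sum borel_measurable_times borel_measurable_power)

lemma W_F: "W l m \<in> borel_measurable (F m)"
  unfolding W_def using meas_F by measurable

lemma sq_eps: "k \<ge> 1 \<Longrightarrow> expectation (\<lambda>\<omega>. (\<epsilon> k \<omega>)\<^sup>2) = \<sigma>2"
  using eps_var[of k] eps_mean[of k] by simp

lemma g_le1:
  assumes k: "k \<ge> 1"
  shows "(\<integral>\<^sup>+e. ennreal (g l u e) \<partial>distr M borel (\<epsilon> k)) \<le> 1"
proof -
  define c where "c = l\<^sup>2 * \<sigma>2 * u\<^sup>2 / 2"
  have gp: "g l u e \<le> exp (-c) * (1 + l*u*e + (l*u)\<^sup>2/2 * e\<^sup>2)" for e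
  proof -
    have "g l u e = exp ((l*u*e) - (l*u*e)\<^sup>2/2) * exp (-c)"
      unfolding g_def c_def by (simp add: mult_exp_exp power_mult_distrib algebra_simps)
    also have "\<dots> \<le> (1 + l*u*e + (l*u*e)\<^sup>2/2) * exp (-c)"
      by (intro mult_right_mono exp_ineq) auto
    finally show ?thesis by (simp add: power_mult_distrib algebra_simps)
  qed
  have nonneg: "0 \<le> exp (-c) * (1 + l*u*e + (l*u)\<^sup>2/2 * e\<^sup>2)" for e
    using gp[of e] by (smt (verit) g_def exp_gt_zero)
  have "(\<integral>\<^sup>+e. ennreal (g l u e) \<partial>distr M borel (\<epsilon> k)) = (\<integral>\<^sup>+\<omega>. ennreal (g l u (\<epsilon> k \<omega>)) \<partial>M)"
    using eps_rv by (subst nn_integral_distr) (auto simp: g_def)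
  also have "\<dots> \<le> (\<integral>\<^sup>+\<omega>. ennreal (exp (-c) * (1 + l*u*\<epsilon> k \<omega> + (l*u)\<^sup>2/2 * (\<epsilon> k \<omega>)\<^sup>2)) \<partial>M)"
    by (intro nn_integral_mono ennreal_leI gp)
  also have "\<dots> = ennreal (\<integral>\<omega>. exp (-c) * (1 + l*u*\<epsilon> k \<omega> + (l*u)\<^sup>2/2 * (\<epsilon> k \<omega>)\<^sup>2) \<partial>M)"
    using eps_int[OF k] eps_int2[OF k] nonneg
    by (intro nn_integral_eq_integral) auto
  also have "(\<integral>\<omega>. exp (-c) * (1 + l*u*\<epsilon> k \<omega> + (l*u)\<^sup>2/2 * (\<epsilon> k \<omega>)\<^sup>2) \<partial>M)
      = exp (-c) * (1 + l*u*expectation (\<epsilon> k) + (l*u)\<^sup>2/2 * expectation (\<lambda>\<omega>. (\<epsilon> k \<omega>)\<^sup>2))"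
    using eps_int[OF k] eps_int2[OF k] by (simp add: integral_add prob_space)
  also have "\<dots> = exp (-c) * (1 + c)"
    using eps_mean[OF k] sq_eps[OF k] by (simp add: c_def power_mult_distrib)
  also have "ennreal (exp (-c) * (1 + c)) \<le> 1"
  proof -
    have "exp (-c) * (1 + c) \<le> exp (-c) * exp c"
      by (intro mult_left_mono exp_ge_add_one_self) auto
    also have "exp (-c) * exp c = 1" by (simp add: mult_exp_exp)
    finally show ?thesis by simp
  qed
  finally show ?thesis .
qed

lemma W_Suc: "W l (Suc m) \<omega> = W l m \<omega> * g l (\<phi> m \<omega>) (\<epsilon> (Suc m) \<omega>)"
  unfolding W_def g_def Mm_def Qm_def Sm_def
  by (simp add: mult_exp_exp algebra_simps)

lemma W_le1: "(\<integral>\<^sup>+\<omega>. ennreal (W l m \<omega>) \<partial>M) \<le> 1"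
proof (induction m)
  case 0
  then show ?case by (simp add: W_def Mm_def Qm_def Sm_def emeasure_space_1)
next
  case (Suc m)
  define Y where "Y \<omega> = (W l m \<omega>, \<phi> m \<omega>)" for \<omega>
  define h where "h = (\<lambda>(z::(real \<times> real) \<times> real). ennreal (fst (fst z)) * ennreal (g l (snd (fst z)) (snd z)))"
  have Ym: "Y \<in> measurable (F m) (borel \<Otimes>\<^sub>M borel)"
    unfolding Y_def using W_F phi_F[of m m] by (intro measurable_Pair) auto
  have hm: "h \<in> borel_measurable ((borel \<Otimes>\<^sub>M borel) \<Otimes>\<^sub>M borel)"
    unfolding h_def g_def by measurable
  have YM: "Y \<in> measurable M (borel \<Otimes>\<^sub>M borel)" by (rule measurable_from_subalg[OF subalg_F Ym])
  have "(\<integral>\<^sup>+\<omega>. ennreal (W l (Suc m) \<omega>) \<partial>M) = (\<integral>\<^sup>+\<omega>. h (Y \<omega>, \<epsilon> (Suc m) \<omega>) \<partial>M)"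
    unfolding W_Suc h_def Y_def
    by (intro nn_integral_cong) (simp add: ennreal_mult W_def g_def)
  also have "\<dots> = (\<integral>\<^sup>+v. \<integral>\<^sup>+e. h (v, e) \<partial>distr M borel (\<epsilon> (Suc m)) \<partial>distr M (borel \<Otimes>\<^sub>M borel) Y)"
    by (rule KEY[OF Ym hm])
  also have "\<dots> \<le> (\<integral>\<^sup>+v. ennreal (fst v) \<partial>distr M (borel \<Otimes>\<^sub>M borel) Y)"
  proof (intro nn_integral_mono)
    fix v :: "real \<times> real"
    have "(\<integral>\<^sup>+e. h (v, e) \<partial>distr M borel (\<epsilon> (Suc m)))
        = ennreal (fst v) * (\<integral>\<^sup>+e. ennreal (g l (snd v) e) \<partial>distr M borel (\<epsilon> (Suc m)))"
      unfolding h_def by (subst nn_integral_cmult[symmetric]) (auto simp: g_def)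
    also have "\<dots> \<le> ennreal (fst v) * 1"
      by (intro mult_left_mono g_le1) auto
    finally show "(\<integral>\<^sup>+e. h (v, e) \<partial>distr M borel (\<epsilon> (Suc m))) \<le> ennreal (fst v)" by simp
  qed
  also have "\<dots> = (\<integral>\<^sup>+\<omega>. ennreal (W l m \<omega>) \<partial>M)"
    using YM by (subst nn_integral_distr) (auto simp: Y_def)
  finally show ?case using Suc.IH by simp
qed

lemma eps_prod: "(\<integral>\<^sup>+\<omega>. ennreal (exp (t * Em m \<omega>)) \<partial>M) = (\<integral>\<^sup>+\<omega>. ennreal (exp (t * (\<epsilon> 1 \<omega>)\<^sup>2)) \<partial>M) ^ m"
proof (induction m)
  case 0
  then show ?case by (simp add: Em_def emeasure_space_1)
next
  case (Suc m)
  define C where "C = (\<integral>\<^sup>+\<omega>. ennreal (exp (t * (\<epsilon> 1 \<omega>)\<^sup>2)) \<partial>M)"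
  define h where "h = (\<lambda>(z::real \<times> real). ennreal (exp (t * fst z)) * ennreal (exp (t * (snd z)\<^sup>2)))"
  have Ym: "Em m \<in> borel_measurable (F m)" by (rule meas_F)
  have hm: "h \<in> borel_measurable (borel \<Otimes>\<^sub>M borel)"
    unfolding h_def by measurable
  have YM: "Em m \<in> borel_measurable M" by (rule measurable_from_subalg[OF subalg_F Ym])
  have C: "(\<integral>\<^sup>+e. ennreal (exp (t * e\<^sup>2)) \<partial>distr M borel (\<epsilon> (Suc m))) = C"
    unfolding C_def eps_id[of "Suc m", simplified] using eps_rv[of 1]
    by (subst nn_integral_distr) auto
  have "(\<integral>\<^sup>+\<omega>. ennreal (exp (t * Em (Suc m) \<omega>)) \<partial>M) = (\<integral>\<^sup>+\<omega>. h (Em m \<omega>, \<epsilon> (Suc m) \<omega>) \<partial>M)"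
    unfolding h_def Em_def
    by (intro nn_integral_cong) (simp add: ennreal_mult[symmetric] mult_exp_exp algebra_simps)
  also have "\<dots> = (\<integral>\<^sup>+v. \<integral>\<^sup>+e. h (v, e) \<partial>distr M borel (\<epsilon> (Suc m)) \<partial>distr M borel (Em m))"
    by (rule KEY[OF Ym hm])
  also have "\<dots> = (\<integral>\<^sup>+v. ennreal (exp (t * v)) * C \<partial>distr M borel (Em m))"
  proof (intro nn_integral_cong)
    fix v :: real
    show "(\<integral>\<^sup>+e. h (v, e) \<partial>distr M borel (\<epsilon> (Suc m))) = ennreal (exp (t * v)) * C"
      unfolding h_def C[symmetric] by (subst nn_integral_cmult[symmetric]) auto
  qed
  also have "\<dots> = (\<integral>\<^sup>+v. ennreal (exp (t * v)) \<partial>distr M borel (Em m)) * C"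
    by (subst nn_integral_multc) auto
  also have "\<dots> = (\<integral>\<^sup>+\<omega>. ennreal (exp (t * Em m \<omega>)) \<partial>M) * C"
    using YM by (subst nn_integral_distr) auto
  finally show ?case using Suc.IH by (simp add: C_def mult.commute)
qed

end

lemma sum_prod_le:
  fixes a b :: "nat \<Rightarrow> real"
  assumes "\<And>k. 0 \<le> a k" "\<And>k. 0 \<le> b k" and that: "finite A"
  shows "(\<Sum>k\<in>A. a k * b k) \<le> (\<Sum>k\<in>A. a k) * (\<Sum>k\<in>A. b k)"
proof -
  have "(\<Sum>k\<in>A. a k * b k) \<le> (\<Sum>k\<in>A. a k * (\<Sum>j\<in>A. b j))"
    using that assms by (intro sum_mono mult_left_mono member_le_sum) auto
  also have "\<dots> = (\<Sum>k\<in>A. a k) * (\<Sum>k\<in>A. b k)" by (simp add: sum_distrib_right)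
  finally show ?thesis .
qed

lemma sum_shift1: fixes f :: "nat \<Rightarrow> real" shows "(\<Sum>k=1..n. f (k - 1)) = (\<Sum>i<n. f i)"
  by (induction n) (auto simp: sum.cl_ivl_Suc)

locale reg3 = reg2 +
  assumes phi_indep: "indep_vars (\<lambda>_. borel) \<phi> UNIV"
    and phi_id: "\<And>n. distr M borel (\<phi> n) = distr M borel (\<phi> 0)"
begin

declare phi_rv[measurable] eps_rv[measurable]

lemma measM: "Sm m \<in> borel_measurable M" "Mm m \<in> borel_measurable M"
  "Qm m \<in> borel_measurable M" "Em m \<in> borel_measurable M" "W l m \<in> borel_measurable M"
  using measurable_from_subalg[OF subalg_F] meas_F W_F by blast+

definition "H0 t = (\<integral>\<omega>. exp (t * (\<phi> 0 \<omega>)\<^sup>2) \<partial>M)"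

lemma pos_integral:
  fixes f :: "'a \<Rightarrow> real"
  assumes "integrable M (\<lambda>\<omega>. exp (f \<omega>))"
  shows "0 < (\<integral>\<omega>. exp (f \<omega>) \<partial>M)"
proof -
  have "0 \<le> (\<integral>\<omega>. exp (f \<omega>) \<partial>M)" using integral_nonneg_AE[of "\<lambda>\<omega>. exp (f \<omega>)" M] by simp
  moreover have "(\<integral>\<omega>. exp (f \<omega>) \<partial>M) \<noteq> 0"
    using integral_nonneg_eq_0_iff_AE[OF assms] by simp
  ultimately show ?thesis by linarith
qed

lemma H0_int: "t \<le> 0 \<Longrightarrow> integrable M (\<lambda>\<omega>. exp (t * (\<phi> 0 \<omega>)\<^sup>2))"
  by (rule integrable_const_bound[where B=1]) (auto intro!: mult_nonpos_nonneg)

lemma H0_pos: "t \<le> 0 \<Longrightarrow> 0 < H0 t"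
  unfolding H0_def by (rule pos_integral[OF H0_int])

lemma phi_prod:
  assumes "t \<le> 0"
  shows "(\<integral>\<^sup>+\<omega>. ennreal (exp (t * Sm n \<omega>)) \<partial>M) = ennreal (H0 t ^ n)"
proof -
  define X where "X = (\<lambda>i \<omega>. ennreal (exp (t * (\<phi> i \<omega>)\<^sup>2)))"
  have ind: "indep_vars (\<lambda>_. borel) (\<lambda>i. (\<lambda>x. ennreal (exp (t * x\<^sup>2))) \<circ> \<phi> i) {..<n}"
    by (rule indep_vars_compose[OF indep_vars_subset[OF phi_indep]]) auto
  have "(\<integral>\<^sup>+\<omega>. ennreal (exp (t * Sm n \<omega>)) \<partial>M) = (\<integral>\<^sup>+\<omega>. (\<Prod>i\<in>{..<n}. X i \<omega>) \<partial>M)"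
    unfolding Sm_def sum_shift1[of "\<lambda>i. (\<phi> i _)\<^sup>2"] X_def
    by (intro nn_integral_cong) (simp add: sum_distrib_left exp_sum prod_ennreal)
  also have "\<dots> = (\<Prod>i\<in>{..<n}. \<integral>\<^sup>+\<omega>. X i \<omega> \<partial>M)"
  proof -
    have indX: "indep_vars (\<lambda>_. borel) X {..<n}" using ind by (simp add: X_def o_def)
    show ?thesis by (rule indep_vars_nn_integral[OF _ indX]) auto
  qed
  also have "\<dots> = (\<Prod>i\<in>{..<n}. ennreal (H0 t))"
  proof (intro prod.cong refl)
    fix i
    have "(\<integral>\<^sup>+\<omega>. X i \<omega> \<partial>M) = (\<integral>\<^sup>+x. ennreal (exp (t * x\<^sup>2)) \<partial>distr M borel (\<phi> i))"
      unfolding X_def using phi_rv by (subst nn_integral_distr) auto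
    also have "\<dots> = (\<integral>\<^sup>+\<omega>. ennreal (exp (t * (\<phi> 0 \<omega>)\<^sup>2)) \<partial>M)"
      unfolding phi_id[of i] using phi_rv by (subst nn_integral_distr) auto
    also have "\<dots> = ennreal (H0 t)"
      unfolding H0_def using H0_int[OF assms] by (intro nn_integral_eq_integral) auto
    finally show "(\<integral>\<^sup>+\<omega>. X i \<omega> \<partial>M) = ennreal (H0 t)" .
  qed
  also have "\<dots> = ennreal (H0 t ^ n)"
    using H0_pos[OF assms] by (simp add: ennreal_power)
  finally show ?thesis .
qed

end

lemma convex_exp2:
  fixes X1 X2 w :: real
  assumes "0 \<le> w" "w \<le> 1"
  shows "exp (w * X1 + (1 - w) * X2) \<le> w * exp X1 + (1 - w) * exp X2"
  using Youngs_inequality_0[of w "1 - w" "exp X1" "exp X2"] assms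
  by (simp add: powr_def mult_exp_exp mult.commute)

context reg3
begin

lemma A_bound:
  assumes p: "p > 1" and x: "x > 0" and y: "y > 0" and sig: "\<sigma>2 > 0" and s: "\<bar>s\<bar> = (1::real)"
  shows "measure M {\<omega>\<in>space M. x * Sm n \<omega> \<le> s * Mm n \<omega> \<and> Em n \<omega> \<le> y * \<sigma>2}
      \<le> exp (real n / p * ln (H0 (- ((p - 1) * x\<^sup>2 / (2 * \<sigma>2 * (1 + y))))))"
proof -
  define A where "A = {\<omega>\<in>space M. x * Sm n \<omega> \<le> s * Mm n \<omega> \<and> Em n \<omega> \<le> y * \<sigma>2}"
  define a where "a = x / \<sigma>2"
  define l where "l = s * a / (1 + y)"
  define K where "K = x\<^sup>2 / (2 * \<sigma>2 * (1 + y))"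
  define t where "t = - ((p - 1) * x\<^sup>2 / (2 * \<sigma>2 * (1 + y)))"
  have tK: "t = - (p - 1) * K" unfolding t_def K_def by (simp only: minus_mult_left times_divide_eq_right minus_divide_left)
  have K0: "K \<ge> 0" unfolding K_def using sig y by simp
  have t0: "t \<le> 0" unfolding tK using K0 p by (simp add: mult_nonpos_nonneg)
  define B where "B = H0 t ^ n"
  have B0: "B > 0" unfolding B_def using H0_pos[OF t0] by simp
  have lnB: "ln B = real n * ln (H0 t)" unfolding B_def using H0_pos[OF t0] by (simp add: ln_realpow)
  define w where "w = (p - 1) / p"
  have w1: "1 - w = 1 / p" unfolding w_def using p by (simp add: field_simps)
  have w0: "0 \<le> w" "w \<le> 1" unfolding w_def using p by auto
  define \<alpha> where "\<alpha> = ln B / p"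
  define \<beta> where "\<beta> = - (p - 1) * ln B / p"
  have ab: "w * \<alpha> + (1 - w) * \<beta> = 0" unfolding w1 unfolding w_def \<alpha>_def \<beta>_def using p
    by (simp add: field_simps)
  have AM: "A \<in> sets M" unfolding A_def using measM by measurable
  have Sn: "0 \<le> Sm n \<omega>" for \<omega> unfolding Sm_def by (auto intro!: sum_nonneg)
  have ptw: "indicator A \<omega> \<le> w * exp \<alpha> * W l n \<omega> + (1 - w) * exp \<beta> * exp (t * Sm n \<omega>)" for \<omega>
  proof (cases "\<omega> \<in> A")
    case False
    then show ?thesis using w0 by (simp add: W_def)
  next
    case True
    then have h1: "x * Sm n \<omega> \<le> s * Mm n \<omega>" and h2: "Em n \<omega> \<le> y * \<sigma>2" unfolding A_def by auto
    have Q: "Qm n \<omega> \<le> Sm n \<omega> * (y * \<sigma>2)"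
    proof -
      have "Qm n \<omega> \<le> Sm n \<omega> * Em n \<omega>"
        unfolding Qm_def Sm_def Em_def by (rule sum_prod_le) auto
      also have "\<dots> \<le> Sm n \<omega> * (y * \<sigma>2)" by (intro mult_left_mono h2 Sn)
      finally show ?thesis .
    qed
    have s2: "s\<^sup>2 = 1"
    proof -
      have "s\<^sup>2 = \<bar>s\<bar>\<^sup>2" by simp
      then show ?thesis using s by simp
    qed
    have l2: "l\<^sup>2 = a\<^sup>2 / (1 + y)\<^sup>2" unfolding l_def using s2 by (simp add: power_mult_distrib power_divide)
    have aa: "a * x = a\<^sup>2 * \<sigma>2" unfolding a_def using sig by (simp add: power2_eq_square)
    have Z1a: "l * Mm n \<omega> \<ge> a / (1 + y) * (x * Sm n \<omega>)"
    proof -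
      have "l * Mm n \<omega> = a / (1 + y) * (s * Mm n \<omega>)" unfolding l_def by simp
      also have "\<dots> \<ge> a / (1 + y) * (x * Sm n \<omega>)"
        using h1 x sig y by (intro mult_left_mono) (auto simp: a_def)
      finally show ?thesis .
    qed
    have Z1b: "l\<^sup>2/2 * (Qm n \<omega> + \<sigma>2 * Sm n \<omega>) \<le> a\<^sup>2 / (1 + y)\<^sup>2 / 2 * (Sm n \<omega> * (y * \<sigma>2) + \<sigma>2 * Sm n \<omega>)"
      unfolding l2 using Q by (intro mult_left_mono) auto
    have eq1: "a / (1 + y) * (x * Sm n \<omega>) - a\<^sup>2 / (1 + y)\<^sup>2 / 2 * (Sm n \<omega> * (y * \<sigma>2) + \<sigma>2 * Sm n \<omega>) = K * Sm n \<omega>"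
    proof -
      define d where "d = 1 + y"
      have d: "d > 0" "d \<noteq> 0" unfolding d_def using y by auto
      have e: "Sm n \<omega> * (y * \<sigma>2) + \<sigma>2 * Sm n \<omega> = \<sigma>2 * d * Sm n \<omega>" unfolding d_def by (simp add: algebra_simps)
      show ?thesis unfolding e d_def[symmetric] a_def K_def using sig d by (simp add: field_simps power2_eq_square)
    qed
    have Z1: "l * Mm n \<omega> - l\<^sup>2/2 * (Qm n \<omega> + \<sigma>2 * Sm n \<omega>) \<ge> K * Sm n \<omega>"
      using Z1a Z1b eq1 by linarith
    have "0 \<le> w * (l * Mm n \<omega> - l\<^sup>2/2 * (Qm n \<omega> + \<sigma>2 * Sm n \<omega>)) + (1 - w) * (t * Sm n \<omega>)"
    proof -
      have "w * (K * Sm n \<omega>) + (1 - w) * (t * Sm n \<omega>) = 0"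
        unfolding w1 tK unfolding w_def using p by (simp add: field_simps)
      moreover have "w * (K * Sm n \<omega>) \<le> w * (l * Mm n \<omega> - l\<^sup>2/2 * (Qm n \<omega> + \<sigma>2 * Sm n \<omega>))"
        using Z1 w0 by (intro mult_left_mono) auto
      ultimately show ?thesis by linarith
    qed
    then have "0 \<le> w * (l * Mm n \<omega> - l\<^sup>2/2 * (Qm n \<omega> + \<sigma>2 * Sm n \<omega>) + \<alpha>) + (1 - w) * (t * Sm n \<omega> + \<beta>)"
      using ab by (simp add: algebra_simps)
    then have "1 \<le> exp (w * (l * Mm n \<omega> - l\<^sup>2/2 * (Qm n \<omega> + \<sigma>2 * Sm n \<omega>) + \<alpha>) + (1 - w) * (t * Sm n \<omega> + \<beta>))"
      by simp
    also have "\<dots> \<le> w * exp (l * Mm n \<omega> - l\<^sup>2/2 * (Qm n \<omega> + \<sigma>2 * Sm n \<omega>) + \<alpha>) + (1 - w) * exp (t * Sm n \<omega> + \<beta>)"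
      by (rule convex_exp2[OF w0])
    also have "\<dots> = w * exp \<alpha> * W l n \<omega> + (1 - w) * exp \<beta> * exp (t * Sm n \<omega>)"
      unfolding W_def by (simp add: exp_add)
    finally show ?thesis using True by simp
  qed
  have "emeasure M A = (\<integral>\<^sup>+\<omega>. indicator A \<omega> \<partial>M)" using AM by simp
  also have "\<dots> \<le> (\<integral>\<^sup>+\<omega>. ennreal (w * exp \<alpha>) * ennreal (W l n \<omega>) + ennreal ((1 - w) * exp \<beta>) * ennreal (exp (t * Sm n \<omega>)) \<partial>M)"
  proof (intro nn_integral_mono)
    fix \<omega>
    have "ennreal (indicator A \<omega>) \<le> ennreal (w * exp \<alpha> * W l n \<omega> + (1 - w) * exp \<beta> * exp (t * Sm n \<omega>))"
      by (rule ennreal_leI[OF ptw])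
    also have "\<dots> = ennreal (w * exp \<alpha>) * ennreal (W l n \<omega>) + ennreal ((1 - w) * exp \<beta>) * ennreal (exp (t * Sm n \<omega>))"
      using w0 by (simp add: ennreal_mult[symmetric] ennreal_plus[symmetric] W_def del: ennreal_plus)
    finally show "indicator A \<omega> \<le> ennreal (w * exp \<alpha>) * ennreal (W l n \<omega>) + ennreal ((1 - w) * exp \<beta>) * ennreal (exp (t * Sm n \<omega>))"
      by (cases "\<omega> \<in> A") (auto simp: indicator_def)
  qed
  also have "\<dots> = ennreal (w * exp \<alpha>) * (\<integral>\<^sup>+\<omega>. ennreal (W l n \<omega>) \<partial>M) + ennreal ((1 - w) * exp \<beta>) * (\<integral>\<^sup>+\<omega>. ennreal (exp (t * Sm n \<omega>)) \<partial>M)"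
    using measM by (simp add: nn_integral_add nn_integral_cmult)
  also have "\<dots> \<le> ennreal (w * exp \<alpha>) * 1 + ennreal ((1 - w) * exp \<beta>) * ennreal B"
    unfolding phi_prod[OF t0] B_def by (intro add_mono mult_left_mono W_le1) auto
  also have "\<dots> = ennreal (w * exp \<alpha> + (1 - w) * (exp \<beta> * B))"
    using w0 B0 by (simp add: ennreal_mult[symmetric] ennreal_plus[symmetric] mult.assoc del: ennreal_plus)
  also have "w * exp \<alpha> + (1 - w) * (exp \<beta> * B) = exp (ln B / p)"
  proof -
    have "exp \<beta> * B = exp (\<beta> + ln B)" using B0 by (simp add: exp_add)
    also have "\<beta> + ln B = ln B / p" unfolding \<beta>_def using p by (simp add: field_simps)
    finally show ?thesis unfolding \<alpha>_def by (simp add: algebra_simps)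
  qed
  finally have "emeasure M A \<le> ennreal (exp (ln B / p))" .
  then have "measure M A \<le> exp (ln B / p)"
    by (simp add: emeasure_eq_measure)
  then show ?thesis unfolding A_def[symmetric] lnB t_def by simp
qed

end

context reg3
begin

lemma E_bound:
  assumes t: "t \<ge> 0" and int: "integrable M (\<lambda>\<omega>. exp (t * (\<epsilon> 1 \<omega>)\<^sup>2))" and n: "n \<ge> 1"
  shows "measure M {\<omega>\<in>space M. y * \<sigma>2 \<le> Em n \<omega>}
     \<le> exp (- real n * (\<sigma>2 * y / real n * t - logmgf_sq M (\<epsilon> 1) t))"
proof -
  define Ev where "Ev = {\<omega>\<in>space M. y * \<sigma>2 \<le> Em n \<omega>}"
  define L0 where "L0 = (\<integral>\<omega>. exp (t * (\<epsilon> 1 \<omega>)\<^sup>2) \<partial>M)"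
  have L0: "L0 > 0" unfolding L0_def by (rule pos_integral[OF int])
  have EvM: "Ev \<in> sets M" unfolding Ev_def using measM by measurable
  have nnL: "(\<integral>\<^sup>+\<omega>. ennreal (exp (t * (\<epsilon> 1 \<omega>)\<^sup>2)) \<partial>M) = ennreal L0"
    unfolding L0_def using int by (intro nn_integral_eq_integral) auto
  have ptw: "indicator Ev \<omega> \<le> ennreal (exp (- (t * y * \<sigma>2))) * ennreal (exp (t * Em n \<omega>))" for \<omega>
  proof (cases "\<omega> \<in> Ev")
    case True
    then have "t * (y * \<sigma>2) \<le> t * Em n \<omega>" unfolding Ev_def using t by (auto intro: mult_left_mono)
    then have "1 \<le> exp (- (t * y * \<sigma>2)) * exp (t * Em n \<omega>)" by (simp add: mult_exp_exp)
    then have "ennreal 1 \<le> ennreal (exp (- (t * y * \<sigma>2)) * exp (t * Em n \<omega>))" by (rule ennreal_leI)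
    then show ?thesis using True by (simp add: ennreal_mult)
  qed simp
  have "emeasure M Ev = (\<integral>\<^sup>+\<omega>. indicator Ev \<omega> \<partial>M)" using EvM by simp
  also have "\<dots> \<le> (\<integral>\<^sup>+\<omega>. ennreal (exp (- (t * y * \<sigma>2))) * ennreal (exp (t * Em n \<omega>)) \<partial>M)"
    by (intro nn_integral_mono ptw)
  also have "\<dots> = ennreal (exp (- (t * y * \<sigma>2))) * ennreal L0 ^ n"
  proof -
    have "(\<lambda>\<omega>. ennreal (exp (t * Em n \<omega>))) \<in> borel_measurable M" using measM by measurable
    then show ?thesis by (subst nn_integral_cmult) (auto simp only: eps_prod nnL)
  qed
  also have "\<dots> = ennreal (exp (- (t * y * \<sigma>2)) * L0 ^ n)"
    using L0 by (simp add: ennreal_power ennreal_mult)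
  also have "exp (- (t * y * \<sigma>2)) * L0 ^ n = exp (- real n * (\<sigma>2 * y / real n * t - logmgf_sq M (\<epsilon> 1) t))"
  proof -
    have "- real n * (\<sigma>2 * y / real n * t - logmgf_sq M (\<epsilon> 1) t) = - (t * y * \<sigma>2) + real n * ln L0"
      using n unfolding logmgf_sq_def L0_def by (simp add: field_simps)
    also have "\<dots> = ln (L0 ^ n) - t * y * \<sigma>2" using L0 by (simp add: ln_realpow)
    finally have e: "- real n * (\<sigma>2 * y / real n * t - logmgf_sq M (\<epsilon> 1) t) = ln (L0 ^ n) - t * y * \<sigma>2" .
    show ?thesis unfolding e using L0 by (simp add: exp_diff exp_minus field_simps)
  qed
  finally show ?thesis unfolding Ev_def[symmetric] by (simp add: emeasure_eq_measure)
qed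

end
theorem corollary5p1:
  fixes M :: "'a measure" and \<phi> \<epsilon> :: "nat \<Rightarrow> 'a \<Rightarrow> real"
    and \<theta> \<sigma>2 c :: real
  assumes P: "prob_space M"
    and phi_rv: "\<And>n. \<phi> n \<in> borel_measurable M"
    and phi_indep: "prob_space.indep_vars M (\<lambda>_. borel) \<phi> UNIV"
    and phi_id: "\<And>n. distr M borel (\<phi> n) = distr M borel (\<phi> 0)"
    and eps_rv: "\<And>n. \<epsilon> n \<in> borel_measurable M"
    and eps_id: "\<And>n. n \<ge> 1 \<Longrightarrow> distr M borel (\<epsilon> n) = distr M borel (\<epsilon> 1)"
    and eps_int: "\<And>n. n \<ge> 1 \<Longrightarrow> integrable M (\<epsilon> n)"
    and eps_int2: "\<And>n. n \<ge> 1 \<Longrightarrow> integrable M (\<lambda>\<omega>. (\<epsilon> n \<omega>)\<^sup>2)"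
    and eps_mean: "\<And>n. n \<ge> 1 \<Longrightarrow> prob_space.expectation M (\<epsilon> n) = 0"
    and eps_var: "\<And>n. n \<ge> 1 \<Longrightarrow> prob_space.variance M (\<epsilon> n) = \<sigma>2"
    and sig_pos: "\<sigma>2 > 0"
    and eps_indep: "\<And>n. prob_space.indep_set M
          (sigma_sets (space M) (rv_events M (\<epsilon> (Suc n))))
          (sigma_sets (space M) ((\<Union>i\<in>{..n}. rv_events M (\<phi> i)) \<union> (\<Union>i\<in>{1..n}. rv_events M (\<epsilon> i))))"
    and c_pos: "c > 0"
    and L_fin: "\<And>t. t \<in> {0..c} \<Longrightarrow> integrable M (\<lambda>\<omega>. exp (t * (\<epsilon> 1 \<omega>)\<^sup>2))"
    and n_pos: "n \<ge> 1" and x_pos: "x > 0" and y_pos: "y > 0"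
  shows "measure M {\<omega> \<in> space M. \<bar>lse \<theta> \<phi> \<epsilon> n \<omega> - \<theta>\<bar> \<ge> x}
     \<le> 2 * (INF p\<in>{1<..}. exp (real n / p *
              logmgf_sq M (\<phi> 0) (- ((p - 1) * x\<^sup>2 / (2 * \<sigma>2 * (1 + y))))))
       + exp (- real n * (SUP t\<in>{0..c}. \<sigma>2 * y / real n * t - logmgf_sq M (\<epsilon> 1) t))"
proof -
  interpret reg3 M \<phi> \<epsilon> \<sigma>2
    using P phi_rv eps_rv eps_indep eps_id eps_int eps_int2 eps_mean eps_var phi_indep phi_id
    unfolding reg3_def reg3_axioms_def reg2_def reg2_axioms_def reg_def reg_axioms_def by blast
  define t where "t p = - ((p - 1) * x\<^sup>2 / (2 * \<sigma>2 * (1 + y)))" for p :: real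
  define A where "A s = {\<omega>\<in>space M. x * Sm n \<omega> \<le> s * Mm n \<omega> \<and> Em n \<omega> \<le> y * \<sigma>2}" for s :: real
  define Ev where "Ev = {\<omega>\<in>space M. y * \<sigma>2 \<le> Em n \<omega>}"
  define I where "I = (INF p\<in>{1<..}. exp (real n / p * logmgf_sq M (\<phi> 0) (t p)))"
  define f where "f t = \<sigma>2 * y / real n * t - logmgf_sq M (\<epsilon> 1) t" for t
  have AM: "A s \<in> sets M" for s unfolding A_def using measM by measurable
  have EvM: "Ev \<in> sets M" unfolding Ev_def using measM by measurable
  have AI: "measure M (A s) \<le> I" if s: "\<bar>s\<bar> = 1" for s
    unfolding I_def
  proof (rule cINF_greatest)
    show "{1::real<..} \<noteq> {}" by auto
    fix p :: real assume "p \<in> {1<..}"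
    then have "measure M (A s) \<le> exp (real n / p * ln (H0 (t p)))"
      unfolding A_def t_def using A_bound[of p x y s n] x_pos y_pos sig_pos s by simp
    then show "measure M (A s) \<le> exp (real n / p * logmgf_sq M (\<phi> 0) (t p))"
      by (simp add: logmgf_sq_def H0_def)
  qed
  have EvB: "measure M Ev \<le> exp (- real n * (SUP t\<in>{0..c}. f t))"
  proof (cases "measure M Ev = 0")
    case True
    then show ?thesis by simp
  next
    case False
    then have Pp: "measure M Ev > 0" using measure_nonneg[of M Ev] by linarith
    have n0: "real n > 0" using n_pos by simp
    have each: "f t \<le> - ln (measure M Ev) / real n" if "t \<in> {0..c}" for t
    proof -
      have "measure M Ev \<le> exp (- real n * f t)"
        unfolding Ev_def f_def using E_bound[of t n y] L_fin[OF that] that n_pos by auto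
      then have "ln (measure M Ev) \<le> ln (exp (- real n * f t))" using Pp by (subst ln_le_cancel_iff) auto
      then have "ln (measure M Ev) \<le> - real n * f t" by simp
      then show ?thesis using n0 by (simp add: field_simps)
    qed
    have "(SUP t\<in>{0..c}. f t) \<le> - ln (measure M Ev) / real n"
      by (rule cSUP_least) (use c_pos each in auto)
    then have "ln (measure M Ev) \<le> - real n * (SUP t\<in>{0..c}. f t)"
      using n0 by (simp add: field_simps)
    then show ?thesis using Pp by (metis exp_le_cancel_iff exp_ln)
  qed
  have sub: "{\<omega> \<in> space M. \<bar>lse \<theta> \<phi> \<epsilon> n \<omega> - \<theta>\<bar> \<ge> x} \<subseteq> A 1 \<union> A (-1) \<union> Ev"
  proof
    fix \<omega> assume w: "\<omega> \<in> {\<omega> \<in> space M. \<bar>lse \<theta> \<phi> \<epsilon> n \<omega> - \<theta>\<bar> \<ge> x}"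
    show "\<omega> \<in> A 1 \<union> A (-1) \<union> Ev"
    proof (cases "y * \<sigma>2 \<le> Em n \<omega>")
      case True then show ?thesis using w unfolding Ev_def by auto
    next
      case False
      then have E: "Em n \<omega> \<le> y * \<sigma>2" by simp
      have num: "(\<Sum>k=1..n. \<phi> (k - 1) \<omega> * regX \<theta> \<phi> \<epsilon> k \<omega>) = \<theta> * Sm n \<omega> + Mm n \<omega>"
        unfolding regX_def Sm_def Mm_def by (simp add: sum.distrib sum_distrib_left power2_eq_square algebra_simps)
      have lse: "lse \<theta> \<phi> \<epsilon> n \<omega> = (\<theta> * Sm n \<omega> + Mm n \<omega>) / Sm n \<omega>"
        unfolding lse_def num by (simp add: Sm_def)
      have "x * Sm n \<omega> \<le> \<bar>Mm n \<omega>\<bar>"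
      proof (cases "Sm n \<omega> = 0")
        case True
        then have "\<forall>k\<in>{1..n}. (\<phi> (k - 1) \<omega>)\<^sup>2 = 0" unfolding Sm_def
          by (subst sum_nonneg_eq_0_iff[symmetric]) auto
        then have "Mm n \<omega> = 0" unfolding Mm_def by simp
        then show ?thesis using True by simp
      next
        case False
        then have Sp: "Sm n \<omega> > 0" using sum_nonneg[of "{1..n}" "\<lambda>k. (\<phi> (k - 1) \<omega>)\<^sup>2"]
          unfolding Sm_def by force
        have "lse \<theta> \<phi> \<epsilon> n \<omega> - \<theta> = Mm n \<omega> / Sm n \<omega>" unfolding lse using Sp by (simp add: field_simps)
        then have "x \<le> \<bar>Mm n \<omega>\<bar> / Sm n \<omega>" using w Sp by simp
        then show ?thesis using Sp by (simp add: field_simps)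
      qed
      then have "x * Sm n \<omega> \<le> 1 * Mm n \<omega> \<or> x * Sm n \<omega> \<le> (-1) * Mm n \<omega>" by linarith
      then show ?thesis using w E unfolding A_def by auto
    qed
  qed
  have "measure M {\<omega> \<in> space M. \<bar>lse \<theta> \<phi> \<epsilon> n \<omega> - \<theta>\<bar> \<ge> x} \<le> measure M (A 1 \<union> A (-1) \<union> Ev)"
    by (rule finite_measure_mono[OF sub]) (use AM EvM in auto)
  also have "\<dots> \<le> measure M (A 1) + measure M (A (-1)) + measure M Ev"
    using AM EvM measure_subadditive[of "A 1" M "A (-1)"] measure_subadditive[of "A 1 \<union> A (-1)" M Ev]
    by (simp add: emeasure_eq_measure)
  also have "\<dots> \<le> I + I + exp (- real n * (SUP t\<in>{0..c}. f t))"
    using AI[of 1] AI[of "-1"] EvB by simp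
  finally show ?thesis unfolding I_def t_def f_def by simp
qed

end
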